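(* Let $G$ be a graph with $\delta(G)\ge2$ and $b_{tR}(G)<\infty$. If $G$ has a unique $\gamma_{tR}(G)$-function, then $b_{tR}(G)=1$.
   Context: A TRDF on $G=(V,E)$ is a function $f:V\to\{0,1,2\}$ such that every $v$ with $f(v)=0$ has a neighbor $u$ with $f(u)=2$ and the subgraph induced by $\{v:f(v)>0\}$ has no isolated vertices; $\gamma_{tR}(G)$ is its minimum weight and a $\gamma_{tR}(G)$-function is a TRDF of that weight. $b_{tR}(G)$ is the minimum $|E'|$ such that $G-E'$ has no isolated vertices and $\gamma_{tR}(G-E')>\gamma_{tR}(G)$ ($\infty$ if none). $\delta(G)$ is the minimum degree. *)

theory Defs
  imports Main "HOL-Library.Extended_Nat"
begin

definition graph :: "'a set \<Rightarrow> 'a set set \<Rightarrow> bool" where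
  "graph V E \<longleftrightarrow> finite V \<and> (\<forall>e\<in>E. \<exists>u v. e = {u, v} \<and> u \<noteq> v \<and> u \<in> V \<and> v \<in> V)"

definition degree :: "'a set \<Rightarrow> 'a set set \<Rightarrow> 'a \<Rightarrow> nat" where
  "degree V E v = card {u \<in> V. {u, v} \<in> E}"

definition min_degree_ge :: "'a set \<Rightarrow> 'a set set \<Rightarrow> nat \<Rightarrow> bool" where
  "min_degree_ge V E k \<longleftrightarrow> (\<forall>v\<in>V. degree V E v \<ge> k)"

definition no_isolated :: "'a set \<Rightarrow> 'a set set \<Rightarrow> bool" where
  "no_isolated V E \<longleftrightarrow> (\<forall>v\<in>V. \<exists>u\<in>V. {u, v} \<in> E)"

text \<open>Total Roman dominating function; f is taken to be 0 outside V so that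
  functions are determined by their values on V.\<close>
definition TRDF :: "'a set \<Rightarrow> 'a set set \<Rightarrow> ('a \<Rightarrow> nat) \<Rightarrow> bool" where
  "TRDF V E f \<longleftrightarrow>
     (\<forall>v. v \<notin> V \<longrightarrow> f v = 0) \<and>
     (\<forall>v\<in>V. f v \<le> 2) \<and>
     (\<forall>v\<in>V. f v = 0 \<longrightarrow> (\<exists>u\<in>V. {u, v} \<in> E \<and> f u = 2)) \<and>
     (\<forall>v\<in>V. f v > 0 \<longrightarrow> (\<exists>u\<in>V. {u, v} \<in> E \<and> f u > 0))"

definition weight :: "'a set \<Rightarrow> ('a \<Rightarrow> nat) \<Rightarrow> nat" where
  "weight V f = (\<Sum>v\<in>V. f v)"

definition gamma_tR :: "'a set \<Rightarrow> 'a set set \<Rightarrow> nat" where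
  "gamma_tR V E = (LEAST w. \<exists>f. TRDF V E f \<and> weight V f = w)"

definition gamma_tR_function :: "'a set \<Rightarrow> 'a set set \<Rightarrow> ('a \<Rightarrow> nat) \<Rightarrow> bool" where
  "gamma_tR_function V E f \<longleftrightarrow> TRDF V E f \<and> weight V f = gamma_tR V E"

text \<open>Total Roman bondage number; infimum of the empty set of enat is \<infinity>.\<close>
definition b_tR :: "'a set \<Rightarrow> 'a set set \<Rightarrow> enat" where
  "b_tR V E = Inf {enat (card E') | E'. E' \<subseteq> E \<and> no_isolated V (E - E') \<and>
                      gamma_tR V (E - E') > gamma_tR V E}"

end

theory Submission
  imports Defs
begin

lemma gamma_le:
  assumes "TRDF V E g" shows "gamma_tR V E \<le> weight V g"
  unfolding gamma_tR_def by (rule Least_le) (use assms in blast)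

lemma gamma_attained:
  assumes "TRDF V E g" shows "\<exists>h. TRDF V E h \<and> weight V h = gamma_tR V E"
  unfolding gamma_tR_def by (rule LeastI_ex) (use assms in blast)

lemma TRDF_mono:
  assumes "TRDF V E' g" "E' \<subseteq> E" shows "TRDF V E g"
  using assms unfolding TRDF_def by blast

lemma TRDF_const:
  assumes "no_isolated V E"
  shows "TRDF V E (\<lambda>x. if x \<in> V then 1 else 0)"
  using assms unfolding TRDF_def no_isolated_def by auto

lemma robust_contra:
  assumes fin: "finite V"
    and gf: "gamma_tR_function V E f"
    and uniq: "\<And>g. gamma_tR_function V E g \<Longrightarrow> g = f"
    and R: "\<And>e. e \<in> E \<Longrightarrow> TRDF V (E - {e}) f"
    and deg: "\<forall>v\<in>V. \<exists>u\<in>V. u \<noteq> v \<and> {u,v} \<in> E"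
    and ne: "V \<noteq> {}"
  shows False
proof -
  have T: "TRDF V E f" and W: "weight V f = gamma_tR V E"
    using gf unfolding gamma_tR_function_def by auto
  show False
  proof (cases "\<exists>v\<in>V. f v = 2")
    case True
    then obtain v where v: "v \<in> V" "f v = 2" by blast
    define g where "g = f(v := 1)"
    have "TRDF V E g"
      unfolding TRDF_def
    proof (intro conjI ballI allI impI)
      fix x assume "x \<notin> V" then show "g x = 0" using T v unfolding TRDF_def g_def by auto
    next
      fix x assume "x \<in> V" then show "g x \<le> 2" using T v unfolding TRDF_def g_def by auto
    next
      fix w assume w: "w \<in> V" "g w = 0"
      then have wv: "w \<noteq> v" and fw: "f w = 0" using v unfolding g_def by (auto split: if_splits)
      obtain u where u: "u \<in> V" "{u,w} \<in> E" "f u = 2" using T w fw unfolding TRDF_def by blast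
      show "\<exists>u\<in>V. {u, w} \<in> E \<and> g u = 2"
      proof (cases "u = v")
        case False then show ?thesis using u unfolding g_def by auto
      next
        case True
        have "TRDF V (E - {{u,w}}) f" using R u by blast
        then obtain x where x: "x \<in> V" "{x,w} \<in> E - {{u,w}}" "f x = 2"
          using w fw unfolding TRDF_def by blast
        then have "x \<noteq> u" by auto
        then show ?thesis using x True unfolding g_def by auto
      qed
    next
      fix w assume w: "w \<in> V" "0 < g w"
      then have "0 < f w" using v unfolding g_def by (auto split: if_splits)
      then obtain u where u: "u \<in> V" "{u,w} \<in> E" "0 < f u" using T w unfolding TRDF_def by blast
      then show "\<exists>u\<in>V. {u, w} \<in> E \<and> 0 < g u" unfolding g_def
        by (intro bexI[of _ u]) auto
    qed
    moreover have "weight V g < weight V f"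
      unfolding weight_def
      by (rule sum_strict_mono_ex1) (use fin v in \<open>auto simp: g_def\<close>)
    ultimately show False using gamma_le W by fastforce
  next
    case False
    have one: "\<And>x. x \<in> V \<Longrightarrow> f x = 1"
    proof -
      fix x assume x: "x \<in> V"
      have "f x \<noteq> 0" using T x False unfolding TRDF_def by blast
      moreover have "f x \<le> 2" using T x unfolding TRDF_def by blast
      moreover have "f x \<noteq> 2" using False x by blast
      ultimately show "f x = 1" by linarith
    qed
    obtain v where v: "v \<in> V" using ne by blast
    obtain u where u: "u \<in> V" "{u,v} \<in> E" and uv: "u \<noteq> v" using deg v by blast
    define g where "g = f(v := 2, u := 0)"
    have "TRDF V E g"
      unfolding TRDF_def
    proof (intro conjI ballI allI impI)
      fix x assume "x \<notin> V" then show "g x = 0" using T v u unfolding TRDF_def g_def by auto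
    next
      fix x assume "x \<in> V" then show "g x \<le> 2" using one unfolding g_def by auto
    next
      fix w assume w: "w \<in> V" "g w = 0"
      then have "w = u" using one uv unfolding g_def by (auto split: if_splits)
      then show "\<exists>x\<in>V. {x, w} \<in> E \<and> g x = 2"
        using u v uv unfolding g_def by (intro bexI[of _ v]) (auto simp: insert_commute)
    next
      fix w assume w: "w \<in> V" "0 < g w"
      then have wu: "w \<noteq> u" unfolding g_def by auto
      obtain x where x: "x \<in> V" "{x,w} \<in> E" using T w one unfolding TRDF_def
        by (metis zero_less_one)
      show "\<exists>x\<in>V. {x, w} \<in> E \<and> 0 < g x"
      proof (cases "x = u")
        case False then show ?thesis using x one unfolding g_def by (intro bexI[of _ x]) auto
      next
        case True
        have "TRDF V (E - {{u,w}}) f" using R x True by blast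
        then obtain y where y: "y \<in> V" "{y,w} \<in> E - {{u,w}}" "f y > 0"
          using w one unfolding TRDF_def by (metis zero_less_one)
        then have "y \<noteq> u" by auto
        then show ?thesis using y one unfolding g_def by (intro bexI[of _ y]) auto
      qed
    qed
    moreover have "weight V g = weight V f"
    proof -
      have "weight V g = g u + g v + sum g (V - {u} - {v})"
        unfolding weight_def using fin u v uv
        by (simp add: sum.remove[of V u] sum.remove[of "V - {u}" v])
      moreover have "weight V f = f u + f v + sum f (V - {u} - {v})"
        unfolding weight_def using fin u v uv
        by (simp add: sum.remove[of V u] sum.remove[of "V - {u}" v])
      moreover have "sum g (V - {u} - {v}) = sum f (V - {u} - {v})"
        by (rule sum.cong) (auto simp: g_def)
      ultimately show ?thesis using one u v uv by (simp add: g_def)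
    qed
    moreover have "g \<noteq> f" using one u unfolding g_def by (metis fun_upd_same zero_neq_one)
    ultimately show False using uniq W unfolding gamma_tR_function_def by auto
  qed
qed

lemma two_elems:
  assumes "finite A" "2 \<le> card A" shows "\<exists>a\<in>A. \<exists>b\<in>A. a \<noteq> b"
proof (rule ccontr)
  assume "\<not> ?thesis"
  then have "card A \<le> Suc 0" by (simp add: card_le_Suc0_iff_eq[OF assms(1)])
  then show False using assms(2) by simp
qed

theorem mainTheorem14:
  fixes V :: "'a set" and E :: "'a set set"
  assumes "graph V E"
    and "min_degree_ge V E 2"
    and "b_tR V E < \<infinity>"
    and "\<exists>!f. gamma_tR_function V E f"
  shows "b_tR V E = 1"
proof -
  have fin: "finite V" using assms(1) unfolding graph_def by blast
  have EV: "E \<subseteq> Pow V"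
  proof
    fix x assume "x \<in> E"
    then obtain a b where "x = {a,b}" "a \<in> V" "b \<in> V" using assms(1) unfolding graph_def by meson
    then show "x \<in> Pow V" by simp
  qed
  then have finE: "finite E" using fin by (meson finite_Pow_iff finite_subset)
  have noloop: "\<And>u v. {u,v} \<in> E \<Longrightarrow> u \<noteq> v"
  proof -
    fix u v assume "{u,v} \<in> E"
    then obtain a b where "{u,v} = {a,b}" "a \<noteq> b" using assms(1) unfolding graph_def by meson
    then show "u \<noteq> v" by (metis doubleton_eq_iff)
  qed
  obtain f0 where gf: "gamma_tR_function V E f0"
    and uniq: "\<And>g. gamma_tR_function V E g \<Longrightarrow> g = f0" using assms(4) by blast
  define S where "S = {enat (card E') | E'. E' \<subseteq> E \<and> no_isolated V (E - E') \<and>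
                      gamma_tR V (E - E') > gamma_tR V E}"
  have bS: "b_tR V E = Inf S" unfolding b_tR_def S_def by simp
  have ne: "V \<noteq> {}"
  proof
    assume "V = {}"
    then have "E \<subseteq> {{}}" using EV by simp
    moreover have "{} \<notin> E" using assms(1) unfolding graph_def by blast
    ultimately have "E = {}" by blast
    then have "S = {}" unfolding S_def by auto
    then show False using assms(3) bS by (simp add: top_enat_def[symmetric])
  qed
  have nbr2: "\<And>v. v \<in> V \<Longrightarrow> \<exists>a\<in>{u\<in>V. {u,v} \<in> E}. \<exists>b\<in>{u\<in>V. {u,v} \<in> E}. a \<noteq> b"
    using assms(2) fin unfolding min_degree_ge_def degree_def
    by (intro two_elems) auto
  have deg: "\<forall>v\<in>V. \<exists>u\<in>V. u \<noteq> v \<and> {u,v} \<in> E"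
    using nbr2 noloop by blast
  have "\<exists>e\<in>E. \<not> TRDF V (E - {e}) f0"
  proof (rule ccontr)
    assume "\<not> ?thesis"
    then have "\<And>e. e \<in> E \<Longrightarrow> TRDF V (E - {e}) f0" by blast
    from robust_contra[OF fin gf uniq this deg ne] show False .
  qed
  then obtain e where e: "e \<in> E" "\<not> TRDF V (E - {e}) f0" by blast
  have noi: "no_isolated V (E - {e})"
    unfolding no_isolated_def
  proof
    fix v assume v: "v \<in> V"
    obtain a b where ab: "a \<in> V" "{a,v} \<in> E" "b \<in> V" "{b,v} \<in> E" "a \<noteq> b"
      using nbr2[OF v] by blast
    show "\<exists>u\<in>V. {u, v} \<in> E - {e}"
    proof (cases "{a,v} = e")
      case True
      then have "{b,v} \<noteq> e" using ab by (metis doubleton_eq_iff)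
      then show ?thesis using ab by blast
    next
      case False then show ?thesis using ab by blast
    qed
  qed
  obtain h where h: "TRDF V (E - {e}) h" "weight V h = gamma_tR V (E - {e})"
    using gamma_attained[OF TRDF_const[OF noi]] by blast
  have hE: "TRDF V E h" using TRDF_mono[OF h(1)] by blast
  have gt: "gamma_tR V (E - {e}) > gamma_tR V E"
  proof -
    have le: "gamma_tR V E \<le> gamma_tR V (E - {e})" using gamma_le[OF hE] h(2) by simp
    have "gamma_tR V E \<noteq> gamma_tR V (E - {e})"
    proof
      assume eq: "gamma_tR V E = gamma_tR V (E - {e})"
      then have "gamma_tR_function V E h" unfolding gamma_tR_function_def using hE h(2) by simp
      then have "h = f0" by (rule uniq)
      then show False using h(1) e(2) by simp
    qed
    then show ?thesis using le by simp
  qed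
  have inS: "1 \<in> S" unfolding S_def using e(1) noi gt
    by (intro CollectI exI[of _ "{e}"]) (simp add: one_enat_def)
  have geS: "\<And>x. x \<in> S \<Longrightarrow> 1 \<le> x"
  proof -
    fix x assume "x \<in> S"
    then obtain E' where E': "x = enat (card E')" "E' \<subseteq> E"
      "gamma_tR V (E - E') > gamma_tR V E" unfolding S_def by blast
    have "E' \<noteq> {}" using E'(3) by auto
    moreover have "finite E'" using E'(2) finE by (rule finite_subset)
    ultimately have "card E' \<ge> 1" by (simp add: Suc_le_eq card_gt_0_iff)
    then show "1 \<le> x" using E'(1) by (simp add: one_enat_def)
  qed
  have "Inf S = 1"
  proof (rule antisym)
    show "Inf S \<le> 1" using inS by (rule Inf_lower)
    show "1 \<le> Inf S" using geS by (rule Inf_greatest)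
  qed
  then show ?thesis using bS by simp
qed

end
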